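(* Let $(X,d)$ be a complete metric space, $N\in\mathbb{N}\setminus\{0\}$, $\alpha:(X\times X)\times(X\times X)\rightarrow[0,+\infty)$ an $N$--transitive mapping on $X\times X$, and $F:X\times X\rightarrow X$ such that for every $\varepsilon>0$ there exists $\delta(\varepsilon)>0$ for which, for all $(x,y),(u,v)\in X\times X$, \[ \varepsilon\leq\tfrac{d(x,u)+d(y,v)}{2}<\varepsilon+\delta(\varepsilon)\Rightarrow\alpha((x,y),(u,v))\,d(F(x,y),F(u,v))<\varepsilon. \] Suppose that: (B1) for all $(x,y),(u,v)\in X\times X$, $\alpha((x,y),(u,v))\geq1$ implies $\alpha((F(x,y),F(y,x)),(F(u,v),F(v,u)))\geq1$; (B2) there exists $(x_{0},y_{0})\in X\times X$ such that $\alpha((x_{0},y_{0}),(F(x_{0},y_{0}),F(y_{0},x_{0})))\geq1$ and $\alpha((F(y_{0},x_{0}),F(x_{0},y_{0})),(y_{0},x_{0}))\geq1$; and at least one of: (B3) $F$ is continuous; or (B4) for every sequence $\{(x_{n},y_{n})\}$ in $X\times X$ with $x_{n}\rightarrow x$, $y_{n}\rightarrow y$ and $\alpha((x_{n},y_{n}),(x_{n+1},y_{n+1}))\geq1$, $\alpha((y_{n+1},x_{n+1}),(y_{n},x_{n}))\geq1$ for all $n$, there is a subsequence with $\alpha((x_{n(k)},y_{n(k)}),(x,y))\geq1$ and $\alpha((y,x),(y_{n(k)},x_{n(k)}))\geq1$ for all $k$. Assume further (B5): $X\times X$ is $\beta$--connected, where $\beta((x,y),(u,v))=\min\{\alpha((x,y),(u,v)),\alpha((v,u),(y,x))\}$.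 Then $F$ has a unique coupled fixed point, this coupled fixed point is of the form $(x^{\ast},x^{\ast})$, $x^{\ast}$ is the unique fixed point of $F$ (i.e., the unique $x$ with $F(x,x)=x$), and $F^{n}(x,y)\rightarrow x^{\ast}$ as $n\rightarrow\infty$ for all $x,y\in X$.
   Context: $\mathbb{N}$ is the set of non-negative integers. For a set $Z$ and $\gamma:Z\times Z\rightarrow[0,+\infty)$, $\gamma$ is $N$--transitive if for all $z_0,\dots,z_{N+1}\in Z$ with $\gamma(z_i,z_{i+1})\geq1$ for all $i\in\{0,\dots,N\}$ one has $\gamma(z_0,z_{N+1})\geq1$. A $\gamma$--chain from $z$ to $w$ is a tuple $(z_0,\dots,z_n)$ with $z_0=z$, $z_n=w$ and, for each $i$, $\gamma(z_{i-1},z_i)\geq1$ or $\gamma(z_i,z_{i-1})\geq1$; $Z$ is $\gamma$--connected if for all $z\neq w$ in $Z$ there is a $\gamma$--chain from $z$ to $w$. A coupled fixed point of $F$ is $(x,y)$ with $F(x,y)=x$, $F(y,x)=y$. Iterates of $F$: for $G,H:X\times X\to X$ define the symmetric composition $(G\ast H)(x,y)=G(H(x,y),H(y,x))$; set $F^{0}(x,y)=x$ and $F^{n+1}=F\ast F^{n}$. *)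

theory Defs
  imports "HOL-Analysis.Analysis"
begin

definition N_transitive :: "nat \<Rightarrow> ('z \<Rightarrow> 'z \<Rightarrow> real) \<Rightarrow> bool" where
  "N_transitive N \<gamma> \<longleftrightarrow>
     (\<forall>z :: nat \<Rightarrow> 'z. (\<forall>i\<le>N. \<gamma> (z i) (z (Suc i)) \<ge> 1) \<longrightarrow> \<gamma> (z 0) (z (N + 1)) \<ge> 1)"

definition gamma_chain :: "('z \<Rightarrow> 'z \<Rightarrow> real) \<Rightarrow> 'z \<Rightarrow> 'z \<Rightarrow> nat \<Rightarrow> (nat \<Rightarrow> 'z) \<Rightarrow> bool" where
  "gamma_chain \<gamma> z w n c \<longleftrightarrow> c 0 = z \<and> c n = w \<and>
     (\<forall>i\<in>{1..n}. \<gamma> (c (i - 1)) (c i) \<ge> 1 \<or> \<gamma> (c i) (c (i - 1)) \<ge> 1)"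

definition gamma_connected :: "('z \<Rightarrow> 'z \<Rightarrow> real) \<Rightarrow> bool" where
  "gamma_connected \<gamma> \<longleftrightarrow> (\<forall>z w. z \<noteq> w \<longrightarrow> (\<exists>n c. gamma_chain \<gamma> z w n c))"

definition coupled_fixed_point :: "('a \<Rightarrow> 'a \<Rightarrow> 'a) \<Rightarrow> 'a \<Rightarrow> 'a \<Rightarrow> bool" where
  "coupled_fixed_point F x y \<longleftrightarrow> F x y = x \<and> F y x = y"

fun F_iter :: "('a \<Rightarrow> 'a \<Rightarrow> 'a) \<Rightarrow> nat \<Rightarrow> 'a \<Rightarrow> 'a \<Rightarrow> 'a" where
  "F_iter F 0 x y = x"
| "F_iter F (Suc n) x y = F (F_iter F n x y) (F_iter F n y x)"

end

theory Submission
  imports Defs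
begin

locale MKL =
  fixes T :: "'b \<Rightarrow> 'b" and g :: "'b \<Rightarrow> 'b \<Rightarrow> real" and r :: "'b \<Rightarrow> 'b \<Rightarrow> real" and N :: nat
  assumes r_sym: "r p q = r q p" and r_nonneg: "r p q \<ge> 0"
    and r_tri: "r p s \<le> r p q + r q s" and r_zero: "r p q = 0 \<longleftrightarrow> p = q"
    and g_nonneg: "g p q \<ge> 0" and g_T: "g p q \<ge> 1 \<Longrightarrow> g (T p) (T q) \<ge> 1"
    and Npos: "N \<noteq> 0" and g_trans: "N_transitive N g"
    and MK: "\<forall>\<epsilon>>0. \<exists>\<delta>>0. \<forall>p q. \<epsilon> \<le> r p q \<and> r p q < \<epsilon> + \<delta> \<longrightarrow> g p q * r (T p) (T q) < \<epsilon>"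
begin

lemma r_refl[simp]: "r p p = 0" using r_zero by simp

lemma nonexp: assumes "g p q \<ge> 1" shows "r (T p) (T q) \<le> r p q"
proof (cases "p = q")
  case True then show ?thesis by simp
next
  case False
  then have pos: "r p q > 0" using r_zero r_nonneg[of p q] by force
  obtain \<delta> where "\<delta> > 0" and d: "\<forall>p' q'. r p q \<le> r p' q' \<and> r p' q' < r p q + \<delta> \<longrightarrow> g p' q' * r (T p') (T q') < r p q"
    using MK pos by blast
  then have "g p q * r (T p) (T q) < r p q" by auto
  moreover have "r (T p) (T q) \<le> g p q * r (T p) (T q)"
    using assms r_nonneg[of "T p" "T q"] by (simp add: mult_le_cancel_right1)
  ultimately show ?thesis by simp
qed

lemma stepL:
  assumes "g p q \<ge> 1" "\<forall>p q. \<epsilon> \<le> r p q \<and> r p q < \<epsilon> + \<delta> \<longrightarrow> g p q * r (T p) (T q) < \<epsilon>"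
    "r p q < \<epsilon> + \<delta>"
  shows "r (T p) (T q) < \<epsilon>"
proof (cases "\<epsilon> \<le> r p q")
  case True
  then have "g p q * r (T p) (T q) < \<epsilon>" using assms by auto
  moreover have "r (T p) (T q) \<le> g p q * r (T p) (T q)"
    using assms r_nonneg[of "T p" "T q"] by (simp add: mult_le_cancel_right1)
  ultimately show ?thesis by simp
next
  case False then show ?thesis using nonexp[OF assms(1)] by simp
qed

lemma g_iter: "g p q \<ge> 1 \<Longrightarrow> g ((T^^k) p) ((T^^k) q) \<ge> 1"
  by (induction k) (auto intro: g_T)

lemma dec_iter: assumes "g p q \<ge> 1" shows "decseq (\<lambda>k. r ((T^^k) p) ((T^^k) q))"
  unfolding decseq_Suc_iff using nonexp[OF g_iter[OF assms]] by simp

lemma to_zero: assumes "g p q \<ge> 1" shows "(\<lambda>k. r ((T^^k) p) ((T^^k) q)) \<longlonglongrightarrow> 0"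
proof -
  define e where "e = (\<lambda>k. r ((T^^k) p) ((T^^k) q))"
  have dec: "decseq e" using dec_iter[OF assms] unfolding e_def .
  have nn: "\<forall>i. 0 \<le> e i" unfolding e_def using r_nonneg by auto
  obtain L where L: "e \<longlonglongrightarrow> L" "\<forall>i. L \<le> e i" using decseq_convergent[OF dec nn] by blast
  have L0: "L \<ge> 0" using LIMSEQ_le_const[OF L(1), of 0] nn by auto
  have "L = 0"
  proof (rule ccontr)
    assume "L \<noteq> 0" then have Lp: "L > 0" using L0 by simp
    obtain \<delta> where dp: "\<delta> > 0" and d: "\<forall>p' q'. L \<le> r p' q' \<and> r p' q' < L + \<delta> \<longrightarrow> g p' q' * r (T p') (T q') < L"
      using MK Lp by blast
    have "eventually (\<lambda>k. e k < L + \<delta>) sequentially"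
      using order_tendstoD(2)[OF L(1)] dp by simp
    then obtain k where k: "e k < L + \<delta>" by (auto simp: eventually_sequentially)
    have "r (T ((T^^k) p)) (T ((T^^k) q)) < L"
      using stepL[OF g_iter[OF assms, of k] d] k L(2) unfolding e_def by auto
    then have "e (Suc k) < L" unfolding e_def by simp
    then show False using L(2) by (metis not_le)
  qed
  then show ?thesis using L(1) unfolding e_def by simp
qed

lemma orbit1: assumes "g p0 (T p0) \<ge> 1" shows "g ((T^^n) p0) ((T^^(Suc n)) p0) \<ge> 1"
  using g_iter[OF assms, of n] by (simp add: funpow_swap1)

lemma orbit_g: assumes "g p0 (T p0) \<ge> 1" shows "g ((T^^n) p0) ((T^^(n+1+k*N)) p0) \<ge> 1"
proof (induction k arbitrary: n)
  case 0 then show ?case using orbit1[OF assms] by simp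
next
  case (Suc k)
  define z where "z = (\<lambda>i. if i = 0 then (T^^n) p0 else (T^^(n + k*N + i)) p0)"
  have "\<forall>i\<le>N. g (z i) (z (Suc i)) \<ge> 1"
  proof (intro allI impI)
    fix i assume "i \<le> N"
    show "g (z i) (z (Suc i)) \<ge> 1"
    proof (cases "i = 0")
      case True then show ?thesis using Suc.IH[of n] by (simp add: z_def add.commute add.left_commute)
    next
      case False then show ?thesis using orbit1[OF assms, of "n + k*N + i"] by (simp add: z_def)
    qed
  qed
  then have "g (z 0) (z (N+1)) \<ge> 1" using g_trans unfolding N_transitive_def by blast
  then show ?case by (simp add: z_def algebra_simps)
qed

lemma tail:
  assumes "\<forall>n\<ge>M. r ((T^^n) p0) ((T^^Suc n) p0) \<le> \<eta>" "c \<ge> M"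
  shows "r ((T^^c) p0) ((T^^(c+j)) p0) \<le> real j * \<eta>"
proof (induction j)
  case 0 then show ?case by simp
next
  case (Suc j)
  have "r ((T^^c) p0) ((T^^(c+Suc j)) p0) \<le> r ((T^^c) p0) ((T^^(c+j)) p0) + r ((T^^(c+j)) p0) ((T^^(Suc (c+j))) p0)"
    using r_tri by (simp del: funpow.simps)
  also have "\<dots> \<le> real j * \<eta> + \<eta>" using Suc assms by (intro add_mono) auto
  finally show ?case by (simp add: algebra_simps)
qed


lemma iter_add: "(T^^m) ((T^^n) x) = (T^^(m+n)) x"
  by (simp add: funpow_add)

lemma mono_iter: assumes "g p q \<ge> 1" "j \<le> i"
  shows "r ((T^^i) p) ((T^^i) q) \<le> r ((T^^j) p) ((T^^j) q)"
  using dec_iter[OF assms(1)] assms(2) unfolding decseq_def by blast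

lemma cauchy:
  assumes g0: "g p0 (T p0) \<ge> 1" and e: "e > 0"
  shows "\<exists>M. \<forall>a\<ge>M. \<forall>b\<ge>a. r ((T^^a) p0) ((T^^b) p0) < e"
proof -
  define p where "p = (\<lambda>n. (T^^n) p0)"
  define \<epsilon> where "\<epsilon> = e / 3"
  have ep: "\<epsilon> > 0" using e by (simp add: \<epsilon>_def)
  obtain \<delta> where dp: "\<delta> > 0" and d: "\<forall>p q. \<epsilon> \<le> r p q \<and> r p q < \<epsilon> + \<delta> \<longrightarrow> g p q * r (T p) (T q) < \<epsilon>"
    using MK ep by blast
  define \<delta>' where "\<delta>' = min \<delta> \<epsilon>"
  have d'p: "\<delta>' > 0" "\<delta>' \<le> \<delta>" "\<delta>' \<le> \<epsilon>" using dp ep by (auto simp: \<delta>'_def)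
  define \<eta> where "\<eta> = \<delta>' / (2 * real N)"
  have Np: "real N \<ge> 1" using Npos by simp
  have etap: "\<eta> > 0" using d'p Np by (simp add: \<eta>_def)
  have Neta: "real N * \<eta> = \<delta>' / 2" using Np by (simp add: \<eta>_def)
  have eta_le: "\<eta> \<le> \<delta>' / 2" using Np d'p by (simp add: \<eta>_def divide_simps)
  have "(\<lambda>n. r ((T^^n) p0) ((T^^n) (T p0))) \<longlonglongrightarrow> 0" using to_zero[OF g0] .
  then have "eventually (\<lambda>n. r ((T^^n) p0) ((T^^n) (T p0)) < \<eta>) sequentially"
    using order_tendstoD(2) etap by blast
  then obtain M where M: "\<forall>n\<ge>M. r ((T^^n) p0) ((T^^n) (T p0)) < \<eta>"
    by (auto simp: eventually_sequentially)
  have M': "\<forall>n\<ge>M. r ((T^^n) p0) ((T^^Suc n) p0) \<le> \<eta>"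
    using M by (simp add: funpow_swap1 less_imp_le)
  have A: "\<forall>a\<ge>M. r (p a) (p (a+1+k*N)) < \<epsilon> + \<delta>'/2" for k
  proof (induction k)
    case 0
    show ?case using M' eta_le ep by (auto simp: p_def)
  next
    case (Suc k)
    show ?case
    proof (intro allI impI)
      fix a assume aM: "a \<ge> M"
      have t1: "r (p a) (p (a+N)) \<le> \<delta>'/2" using tail[OF M' aM, of N] Neta by (simp add: p_def)
      have ga: "g (p a) (p (a+1+k*N)) \<ge> 1" using orbit_g[OF g0] by (simp add: p_def)
      have "r (T (p a)) (T (p (a+1+k*N))) < \<epsilon>"
        using stepL[OF ga d] Suc.IH aM d'p by force
      then have s1: "r (p (a+1)) (p (a+1+1+k*N)) < \<epsilon>" by (simp add: p_def)
      have ga1: "g (p (a+1)) (p (a+1+1+k*N)) \<ge> 1" using orbit_g[OF g0, of "a+1" k] by (simp add: p_def del: funpow.simps)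
      have m1: "r ((T^^(N-1)) (p (a+1))) ((T^^(N-1)) (p (a+1+1+k*N))) \<le> r (p (a+1)) (p (a+1+1+k*N))"
        using mono_iter[OF ga1, of 0 "N-1"] by simp
      have e1: "N-1+(a+1) = a+N" "N-1+(a+1+1+k*N) = a+N+1+k*N" using Npos by auto
      have q1: "(T^^(N-1)) (p (a+1)) = p (a+N)"
        unfolding p_def iter_add e1(1) ..
      have q2: "(T^^(N-1)) (p (a+1+1+k*N)) = p (a+N+1+k*N)"
        unfolding p_def iter_add e1(2) ..
      have "r (p (a+N)) (p (a+N+1+k*N)) \<le> r (p (a+1)) (p (a+1+1+k*N))" using m1 unfolding q1 q2 .
      then have s2: "r (p (a+N)) (p (a+N+1+k*N)) < \<epsilon>" using s1 by linarith
      have "r (p a) (p (a+1+Suc k*N)) \<le> r (p a) (p (a+N)) + r (p (a+N)) (p (a+N+1+k*N))"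
        using r_tri by (simp add: algebra_simps)
      then show "r (p a) (p (a+1+Suc k*N)) < \<epsilon> + \<delta>'/2" using t1 s2 by simp
    qed
  qed
  have "\<forall>a\<ge>M. \<forall>b\<ge>a. r (p a) (p b) < e"
  proof (intro allI impI)
    fix a b assume aM: "a \<ge> M" and ab: "b \<ge> a"
    show "r (p a) (p b) < e"
    proof (cases "b = a")
      case True then show ?thesis using e by simp
    next
      case False
      define k where "k = (b - a - 1) div N"
      define s where "s = (b - a - 1) mod N"
      have bs: "b = (a+1+k*N) + s" using False ab by (simp add: k_def s_def)
      have sN: "s < N" using Npos by (simp add: s_def)
      have "r (p a) (p b) \<le> r (p a) (p (a+1+k*N)) + r (p (a+1+k*N)) (p b)" by (rule r_tri)
      moreover have "r (p (a+1+k*N)) (p b) \<le> real s * \<eta>"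
        using tail[OF M', of "a+1+k*N" s] aM bs by (simp add: p_def)
      moreover have "real s * \<eta> \<le> real N * \<eta>" using sN etap by simp
      moreover have "r (p a) (p (a+1+k*N)) < \<epsilon> + \<delta>'/2" using A[of k] aM by blast
      ultimately show ?thesis using Neta d'p ep by (simp add: \<epsilon>_def)
    qed
  qed
  then show ?thesis unfolding p_def by blast
qed

lemma conn_conv:
  assumes conn: "gamma_connected g" and fx: "T ps = ps"
  shows "(\<lambda>k. r ((T^^k) q) ps) \<longlonglongrightarrow> 0"
proof -
  have fixk: "(T^^k) ps = ps" for k by (induction k) (simp_all add: fx)
  show ?thesis
  proof (cases "q = ps")
    case True then show ?thesis by (simp add: fixk)
  next
    case False
    then obtain n c where ch: "gamma_chain g q ps n c" using conn unfolding gamma_connected_def by blast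
    have "j \<le> n \<Longrightarrow> (\<lambda>k. r ((T^^k) (c 0)) ((T^^k) (c j))) \<longlonglongrightarrow> 0" for j
    proof (induction j)
      case 0 then show ?case by simp
    next
      case (Suc j)
      have "g (c j) (c (Suc j)) \<ge> 1 \<or> g (c (Suc j)) (c j) \<ge> 1"
        using ch Suc.prems unfolding gamma_chain_def by (metis atLeastAtMost_iff diff_Suc_1 le_add1 plus_1_eq_Suc)
      then have z2: "(\<lambda>k. r ((T^^k) (c j)) ((T^^k) (c (Suc j)))) \<longlonglongrightarrow> 0"
        using to_zero r_sym by (metis (no_types, lifting) ext)
      have z: "(\<lambda>k. r ((T^^k) (c 0)) ((T^^k) (c j)) + r ((T^^k) (c j)) ((T^^k) (c (Suc j)))) \<longlonglongrightarrow> 0"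
        using tendsto_add[OF Suc.IH z2] Suc.prems by simp
      show ?case
        by (rule real_tendsto_sandwich[OF _ _ tendsto_const z]) (auto intro!: always_eventually r_nonneg r_tri)
    qed
    from this[of n] ch show ?thesis unfolding gamma_chain_def by (simp add: fixk)
  qed
qed

lemma fix_unique:
  assumes conn: "gamma_connected g" and "T ps = ps" "T q = q" shows "q = ps"
proof -
  have fixk: "(T^^k) q = q" for k by (induction k) (simp_all add: assms)
  have "(\<lambda>k. r q ps) \<longlonglongrightarrow> 0" using conn_conv[OF assms(1,2), of q] by (simp add: fixk)
  then have "r q ps = 0" by (simp add: LIMSEQ_const_iff)
  then show ?thesis using r_zero by simp
qed

end

theorem corollary3:
  fixes F :: "'a::complete_space \<Rightarrow> 'a \<Rightarrow> 'a"
    and \<alpha> :: "('a \<times> 'a) \<Rightarrow> ('a \<times> 'a) \<Rightarrow> real"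
    and N :: nat
  assumes N_pos: "N \<noteq> 0"
    and alpha_nonneg: "\<And>p q. \<alpha> p q \<ge> 0"
    and alpha_trans: "N_transitive N \<alpha>"
    and contr: "\<forall>\<epsilon>>0. \<exists>\<delta>>0. \<forall>x y u v.
        \<epsilon> \<le> (dist x u + dist y v) / 2 \<and> (dist x u + dist y v) / 2 < \<epsilon> + \<delta> \<longrightarrow>
        \<alpha> (x, y) (u, v) * dist (F x y) (F u v) < \<epsilon>"
    and B1: "\<And>x y u v. \<alpha> (x, y) (u, v) \<ge> 1 \<Longrightarrow>
        \<alpha> (F x y, F y x) (F u v, F v u) \<ge> 1"
    and B2: "\<exists>x0 y0. \<alpha> (x0, y0) (F x0 y0, F y0 x0) \<ge> 1 \<and>
        \<alpha> (F y0 x0, F x0 y0) (y0, x0) \<ge> 1"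
    and B34: "continuous_on UNIV (\<lambda>p. F (fst p) (snd p)) \<or>
        (\<forall>xs ys x y. xs \<longlonglongrightarrow> x \<and> ys \<longlonglongrightarrow> y \<and>
           (\<forall>n. \<alpha> (xs n, ys n) (xs (Suc n), ys (Suc n)) \<ge> 1 \<and>
                \<alpha> (ys (Suc n), xs (Suc n)) (ys n, xs n) \<ge> 1) \<longrightarrow>
           (\<exists>r :: nat \<Rightarrow> nat. strict_mono r \<and> (\<forall>k. \<alpha> (xs (r k), ys (r k)) (x, y) \<ge> 1 \<and>
                                        \<alpha> (y, x) (ys (r k), xs (r k)) \<ge> 1)))"
    and B5: "gamma_connected (\<lambda>(x, y) (u, v). min (\<alpha> (x, y) (u, v)) (\<alpha> (v, u) (y, x)))"
  shows "\<exists>xs. (\<forall>x y. coupled_fixed_point F x y \<longleftrightarrow> x = xs \<and> y = xs) \<and>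
              (\<forall>x. F x x = x \<longleftrightarrow> x = xs) \<and>
              (\<forall>x y. (\<lambda>n. F_iter F n x y) \<longlonglongrightarrow> xs)"
  proof -
  define T where "T = (\<lambda>(x::'a,y::'a). (F x y, F y x))"
  define g :: "('a\<times>'a) \<Rightarrow> ('a\<times>'a) \<Rightarrow> real" where
    "g = (\<lambda>(x, y) (u, v). min (\<alpha> (x, y) (u, v)) (\<alpha> (v, u) (y, x)))"
  define r :: "('a\<times>'a) \<Rightarrow> ('a\<times>'a) \<Rightarrow> real" where
    "r = (\<lambda>(x,y) (u,v). (dist x u + dist y v)/2)"
  have T_simp[simp]: "T (x,y) = (F x y, F y x)" for x y by (simp add: T_def)
  have g_simp[simp]: "g (x,y) (u,v) = min (\<alpha> (x, y) (u, v)) (\<alpha> (v, u) (y, x))" for x y u v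
    by (simp add: g_def)
  have r_simp[simp]: "r (x,y) (u,v) = (dist x u + dist y v)/2" for x y u v by (simp add: r_def)
  have g_alt: "g p q = min (\<alpha> p q) (\<alpha> (prod.swap q) (prod.swap p))" for p q
    by (cases p; cases q) simp
  have r_alt: "r p q = (dist (fst p) (fst q) + dist (snd p) (snd q)) / 2" for p q
    by (cases p; cases q) simp
  interpret M: MKL T g r N
  proof (unfold_locales)
    fix p q :: "'a \<times> 'a"
    show "r p q = r q p" by (cases p; cases q) (simp add: dist_commute)
    show "r p q \<ge> 0" by (cases p; cases q) simp
    show "r p q = 0 \<longleftrightarrow> p = q" by (cases p; cases q) (simp add: add_nonneg_eq_0_iff)
    show "g p q \<ge> 0" using alpha_nonneg by (simp add: g_alt)
  next
    fix p q s :: "'a \<times> 'a"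
    show "r p s \<le> r p q + r q s"
      using dist_triangle[of "fst p" "fst s" "fst q"] dist_triangle[of "snd p" "snd s" "snd q"]
      unfolding r_alt by argo
  next
    fix p q :: "'a \<times> 'a" assume "g p q \<ge> 1"
    then show "g (T p) (T q) \<ge> 1" by (cases p; cases q) (auto intro!: B1)
  next
    show "N \<noteq> 0" by (rule N_pos)
  next
    show "N_transitive N g" unfolding N_transitive_def
    proof (intro allI impI)
      fix z :: "nat \<Rightarrow> 'a \<times> 'a" assume H: "\<forall>i\<le>N. 1 \<le> g (z i) (z (Suc i))"
      have "1 \<le> \<alpha> (z 0) (z (N+1))"
        using alpha_trans H unfolding N_transitive_def g_alt by simp
      moreover
      define w where "w = (\<lambda>i. prod.swap (z (N + 1 - i)))"
      have "\<forall>i\<le>N. 1 \<le> \<alpha> (w i) (w (Suc i))"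
      proof (intro allI impI)
        fix i assume "i \<le> N"
        then have "1 \<le> g (z (N - i)) (z (Suc (N - i)))" using H by simp
        moreover have "N + 1 - i = Suc (N - i)" "N + 1 - Suc i = N - i" using \<open>i \<le> N\<close> by auto
        ultimately show "1 \<le> \<alpha> (w i) (w (Suc i))" unfolding w_def g_alt by simp
      qed
      then have "1 \<le> \<alpha> (w 0) (w (N+1))" using alpha_trans unfolding N_transitive_def by blast
      ultimately show "1 \<le> g (z 0) (z (N+1))" unfolding g_alt w_def by simp
    qed
  next
    show "\<forall>\<epsilon>>0. \<exists>\<delta>>0. \<forall>p q. \<epsilon> \<le> r p q \<and> r p q < \<epsilon> + \<delta> \<longrightarrow> g p q * r (T p) (T q) < \<epsilon>"
    proof (intro allI impI)
      fix \<epsilon> :: real assume "\<epsilon> > 0"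
      then obtain \<delta> where dp: "\<delta> > 0" and d: "\<forall>x y u v.
        \<epsilon> \<le> (dist x u + dist y v) / 2 \<and> (dist x u + dist y v) / 2 < \<epsilon> + \<delta> \<longrightarrow>
        \<alpha> (x, y) (u, v) * dist (F x y) (F u v) < \<epsilon>" using contr by blast
      have "\<forall>p q. \<epsilon> \<le> r p q \<and> r p q < \<epsilon> + \<delta> \<longrightarrow> g p q * r (T p) (T q) < \<epsilon>"
      proof (intro allI impI)
        fix p q :: "'a \<times> 'a" assume pq: "\<epsilon> \<le> r p q \<and> r p q < \<epsilon> + \<delta>"
        obtain x y where p: "p = (x,y)" by (cases p)
        obtain u v where q: "q = (u,v)" by (cases q)
        have h1: "\<alpha> (x, y) (u, v) * dist (F x y) (F u v) < \<epsilon>" using d pq p q by auto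
        have "\<epsilon> \<le> (dist v y + dist u x) / 2 \<and> (dist v y + dist u x) / 2 < \<epsilon> + \<delta>"
          using pq p q by (simp add: dist_commute add.commute)
        then have h2: "\<alpha> (v, u) (y, x) * dist (F v u) (F y x) < \<epsilon>" using d by blast
        define m where "m = min (\<alpha> (x, y) (u, v)) (\<alpha> (v, u) (y, x))"
        have m1: "m * dist (F x y) (F u v) \<le> \<alpha> (x, y) (u, v) * dist (F x y) (F u v)"
          by (rule mult_right_mono) (auto simp: m_def)
        have m2: "m * dist (F y x) (F v u) \<le> \<alpha> (v, u) (y, x) * dist (F v u) (F y x)"
          by (simp add: dist_commute, rule mult_right_mono) (auto simp: m_def)
        have "g p q * r (T p) (T q) = (m * dist (F x y) (F u v) + m * dist (F y x) (F v u)) / 2"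
          using p q by (simp add: m_def algebra_simps)
        also have "\<dots> < \<epsilon>" using m1 m2 h1 h2 by simp
        finally show "g p q * r (T p) (T q) < \<epsilon>" .
      qed
      then show "\<exists>\<delta>>0. \<forall>p q. \<epsilon> \<le> r p q \<and> r p q < \<epsilon> + \<delta> \<longrightarrow> g p q * r (T p) (T q) < \<epsilon>"
        using dp by blast
    qed
  qed
  obtain x0 y0 where B2': "\<alpha> (x0, y0) (F x0 y0, F y0 x0) \<ge> 1" "\<alpha> (F y0 x0, F x0 y0) (y0, x0) \<ge> 1"
    using B2 by blast
  define p0 where "p0 = (x0, y0)"
  have g0: "g p0 (T p0) \<ge> 1" using B2' by (simp add: p0_def)
  define p where "p = (\<lambda>n. (T^^n) p0)"
  define xs where "xs = (\<lambda>n. fst (p n))"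
  define ys where "ys = (\<lambda>n. snd (p n))"
  have pxy: "p n = (xs n, ys n)" for n by (simp add: xs_def ys_def)
  have pSuc: "p (Suc n) = T (p n)" for n by (simp add: p_def)
  have xsS: "xs (Suc n) = F (xs n) (ys n) \<and> ys (Suc n) = F (ys n) (xs n)" for n
    using pSuc[of n] by (simp add: pxy)
  have cau: "\<exists>M. \<forall>m\<ge>M. \<forall>n\<ge>M. r (p m) (p n) < e" if ep: "e > 0" for e
  proof -
    obtain M where M: "\<forall>a\<ge>M. \<forall>b\<ge>a. r (p a) (p b) < e" using M.cauchy[OF g0 ep] unfolding p_def by blast
    have "\<forall>m\<ge>M. \<forall>n\<ge>M. r (p m) (p n) < e"
    proof (intro allI impI)
      fix m n assume "m \<ge> M" "n \<ge> M"
      show "r (p m) (p n) < e"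
      proof (cases "m \<le> n")
        case True then show ?thesis using M \<open>m \<ge> M\<close> by blast
      next
        case False
        then have "r (p n) (p m) < e" using M \<open>n \<ge> M\<close> by simp
        then show ?thesis using M.r_sym[of "p m" "p n"] by argo
      qed
    qed
    then show ?thesis by blast
  qed
  have "Cauchy xs"
  proof (rule metric_CauchyI)
    fix e :: real assume "e > 0"
    then obtain M where M: "\<forall>m\<ge>M. \<forall>n\<ge>M. r (p m) (p n) < e / 2" using cau[of "e/2"] by auto
    have "\<forall>m\<ge>M. \<forall>n\<ge>M. dist (xs m) (xs n) < e"
    proof (intro allI impI)
      fix m n assume "m \<ge> M" "n \<ge> M"
      then have "r (p m) (p n) < e/2" using M by blast
      then show "dist (xs m) (xs n) < e" using zero_le_dist[of "ys m" "ys n"] unfolding r_alt xs_def ys_def by argo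
    qed
    then show "\<exists>M. \<forall>m\<ge>M. \<forall>n\<ge>M. dist (xs m) (xs n) < e" by blast
  qed
  then obtain xa where xa: "xs \<longlonglongrightarrow> xa" using Cauchy_convergent convergent_def by blast
  have "Cauchy ys"
  proof (rule metric_CauchyI)
    fix e :: real assume "e > 0"
    then obtain M where M: "\<forall>m\<ge>M. \<forall>n\<ge>M. r (p m) (p n) < e / 2" using cau[of "e/2"] by auto
    have "\<forall>m\<ge>M. \<forall>n\<ge>M. dist (ys m) (ys n) < e"
    proof (intro allI impI)
      fix m n assume "m \<ge> M" "n \<ge> M"
      then have "r (p m) (p n) < e/2" using M by blast
      then show "dist (ys m) (ys n) < e" using zero_le_dist[of "xs m" "xs n"] unfolding r_alt xs_def ys_def by argo
    qed
    then show "\<exists>M. \<forall>m\<ge>M. \<forall>n\<ge>M. dist (ys m) (ys n) < e" by blast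
  qed
  then obtain ya where ya: "ys \<longlonglongrightarrow> ya" using Cauchy_convergent convergent_def by blast
  define ps where "ps = (xa, ya)"
  have rconv: "(\<lambda>n. r (p n) ps) \<longlonglongrightarrow> 0"
  proof -
    have "(\<lambda>n. dist (xs n) xa) \<longlonglongrightarrow> 0" "(\<lambda>n. dist (ys n) ya) \<longlonglongrightarrow> 0"
      using xa ya tendsto_dist_iff by auto
    then have "(\<lambda>n. (dist (xs n) xa + dist (ys n) ya) / 2) \<longlonglongrightarrow> 0"
      by (intro tendsto_divide_zero tendsto_add_zero)
    then show ?thesis by (simp add: pxy ps_def)
  qed
  have sub: "\<exists>s. strict_mono s \<and> (\<lambda>k. r (p (Suc (s k))) (T ps)) \<longlonglongrightarrow> 0"
    using B34
  proof
    assume cont: "continuous_on UNIV (\<lambda>p. F (fst p) (snd p))"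
    have ic: "isCont (\<lambda>p. F (fst p) (snd p)) z" for z
      using cont continuous_on_eq_continuous_at[of UNIV] by auto
    have "(\<lambda>k. F (fst (xs k, ys k)) (snd (xs k, ys k))) \<longlonglongrightarrow> F (fst (xa, ya)) (snd (xa, ya))"
      by (rule isCont_tendsto_compose[OF ic]) (intro tendsto_Pair xa ya)
    then have c1: "(\<lambda>k. dist (F (xs k) (ys k)) (F xa ya)) \<longlonglongrightarrow> 0" by (simp add: tendsto_dist_iff[THEN iffD1])
    have "(\<lambda>k. F (fst (ys k, xs k)) (snd (ys k, xs k))) \<longlonglongrightarrow> F (fst (ya, xa)) (snd (ya, xa))"
      by (rule isCont_tendsto_compose[OF ic]) (intro tendsto_Pair xa ya)
    then have c2: "(\<lambda>k. dist (F (ys k) (xs k)) (F ya xa)) \<longlonglongrightarrow> 0" by (simp add: tendsto_dist_iff[THEN iffD1])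
    have "(\<lambda>k. (dist (F (xs k) (ys k)) (F xa ya) + dist (F (ys k) (xs k)) (F ya xa)) / 2) \<longlonglongrightarrow> 0"
      by (intro tendsto_divide_zero tendsto_add_zero c1 c2)
    then have "(\<lambda>k. r (p (Suc (id k))) (T ps)) \<longlonglongrightarrow> 0" by (simp add: pxy xsS ps_def)
    then show ?thesis using strict_mono_id by blast
  next
    assume B4: "\<forall>xs ys x y. xs \<longlonglongrightarrow> x \<and> ys \<longlonglongrightarrow> y \<and>
           (\<forall>n. \<alpha> (xs n, ys n) (xs (Suc n), ys (Suc n)) \<ge> 1 \<and>
                \<alpha> (ys (Suc n), xs (Suc n)) (ys n, xs n) \<ge> 1) \<longrightarrow>
           (\<exists>r :: nat \<Rightarrow> nat. strict_mono r \<and> (\<forall>k. \<alpha> (xs (r k), ys (r k)) (x, y) \<ge> 1 \<and>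
                                        \<alpha> (y, x) (ys (r k), xs (r k)) \<ge> 1))"
    have "g (p n) (p (Suc n)) \<ge> 1" for n using M.orbit1[OF g0, of n] by (simp add: p_def)
    then have adj: "\<forall>n. \<alpha> (xs n, ys n) (xs (Suc n), ys (Suc n)) \<ge> 1 \<and>
                \<alpha> (ys (Suc n), xs (Suc n)) (ys n, xs n) \<ge> 1" by (simp add: pxy)
    then obtain s :: "nat \<Rightarrow> nat" where s: "strict_mono s" "\<forall>k. \<alpha> (xs (s k), ys (s k)) (xa, ya) \<ge> 1 \<and>
                                        \<alpha> (ya, xa) (ys (s k), xs (s k)) \<ge> 1"
      using B4[rule_format, OF conjI[OF xa conjI[OF ya adj]]] by blast
    have gs: "g (p (s k)) ps \<ge> 1" for k using s(2) by (simp add: pxy ps_def)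
    have zs: "(\<lambda>k. r (p (s k)) ps) \<longlonglongrightarrow> 0" using LIMSEQ_subseq_LIMSEQ[OF rconv s(1)] by (simp add: comp_def)
    have "(\<lambda>k. r (p (Suc (s k))) (T ps)) \<longlonglongrightarrow> 0"
      by (rule real_tendsto_sandwich[OF _ _ tendsto_const zs])
         (auto intro!: always_eventually M.r_nonneg simp: pSuc M.nonexp[OF gs])
    then show ?thesis using s(1) by blast
  qed
  then obtain s :: "nat \<Rightarrow> nat" where s: "strict_mono s" "(\<lambda>k. r (p (Suc (s k))) (T ps)) \<longlonglongrightarrow> 0" by blast
  have sm: "strict_mono (\<lambda>k. Suc (s k))" using s(1) by (simp add: strict_mono_def)
  have "(\<lambda>k. r (p (Suc (s k))) ps) \<longlonglongrightarrow> 0" using LIMSEQ_subseq_LIMSEQ[OF rconv sm] by (simp add: comp_def)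
  then have "(\<lambda>k. r ps (p (Suc (s k))) + r (p (Suc (s k))) (T ps)) \<longlonglongrightarrow> 0"
    using tendsto_add_zero[OF _ s(2)] M.r_sym by simp
  moreover have "\<forall>k. r ps (T ps) \<le> r ps (p (Suc (s k))) + r (p (Suc (s k))) (T ps)" using M.r_tri by blast
  ultimately have "r ps (T ps) \<le> 0" using LIMSEQ_le_const by blast
  then have Tps: "T ps = ps" using M.r_nonneg[of ps "T ps"] M.r_zero[of ps "T ps"] by simp
  then have Fa: "F xa ya = xa" "F ya xa = ya" by (simp_all add: ps_def)
  have "T (ya, xa) = (ya, xa)" using Fa by simp
  have conn: "gamma_connected g" using B5 unfolding g_def .
  then have "(ya, xa) = ps" using M.fix_unique[OF conn Tps] \<open>T (ya, xa) = (ya, xa)\<close> by blast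
  then have xy: "ya = xa" unfolding ps_def by (rule Pair_inject)
  have iterT: "(T^^n) (x,y) = (F_iter F n x y, F_iter F n y x)" for n x y
    by (induction n) simp_all
  show ?thesis
  proof (intro exI conjI allI)
    fix x y
    show "coupled_fixed_point F x y \<longleftrightarrow> x = xa \<and> y = xa"
    proof
      assume "coupled_fixed_point F x y"
      then have "T (x,y) = (x,y)" by (simp add: coupled_fixed_point_def)
      then have "(x,y) = ps" using M.fix_unique[OF conn Tps] by blast
      then show "x = xa \<and> y = xa" using xy by (simp add: ps_def)
    next
      assume "x = xa \<and> y = xa" then show "coupled_fixed_point F x y"
        using Fa xy by (simp add: coupled_fixed_point_def)
    qed
  next
    fix x
    show "F x x = x \<longleftrightarrow> x = xa"
    proof
      assume "F x x = x"
      then have "T (x,x) = (x,x)" by simp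
      then have "(x,x) = ps" using M.fix_unique[OF conn Tps] by blast
      then show "x = xa" by (simp add: ps_def)
    next
      assume "x = xa" then show "F x x = x" using Fa xy by simp
    qed
  next
    fix x y
    have z: "(\<lambda>k. r ((T^^k) (x,y)) ps) \<longlonglongrightarrow> 0" using M.conn_conv[OF conn Tps] .
    have z2: "(\<lambda>k. 2 * r ((T^^k) (x,y)) ps) \<longlonglongrightarrow> 0" using tendsto_mult_right_zero[OF z] by simp
    have "(\<lambda>k. dist (F_iter F k x y) xa) \<longlonglongrightarrow> 0"
      by (rule real_tendsto_sandwich[OF _ _ tendsto_const z2])
         (auto intro!: always_eventually simp: iterT ps_def)
    then show "(\<lambda>n. F_iter F n x y) \<longlonglongrightarrow> xa" by (rule tendsto_dist_iff[THEN iffD2])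
  qed
qed

end
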